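(* Let $Y,Z$ be finite-dimensional real or complex vector spaces, let $F\colon Y\to Z$ be quadratic, let $\mathcal A\subset L(Y,Y)$ be a Jordan operator algebra on $Y$, let $\alpha\colon Z\to\mathcal A$, and let $\beta\colon\mathcal A\to L(Z,Z)$ satisfy $F'(y)Ty=\beta(T)F(y)$ for all $y\in Y$, $T\in\mathcal A$. Let nonzero $b_1,\dots,b_s$ and $h>0$ be given and suppose $y_0,y_1,Y_1,\dots,Y_s\in Y$ satisfy the SyDIRK equations for $f(y)=\alpha(F(y))y$: \[ Y_i = y_0 + h\sum_{j=1}^{i-1} b_j f(Y_j) + \frac h2 b_i f(Y_i),\qquad y_1 = y_0 + h\sum_{i=1}^s b_i f(Y_i). \] Then $z_0=F(y_0)$, $Z_i=F(Y_i)$, $z_1=F(y_1)$ satisfy \[ Z_i = z_0 + h\sum_{j=1}^{i-1} b_j\beta(\alpha(Z_j))Z_j + \frac h2 b_i\beta(\alpha(Z_i))Z_i - \frac{h^2}{8}b_i^2\bigl[\beta(\alpha(Z_i))^2-\beta(\alpha(Z_i)^2)\bigr]Z_i, \] \[ z_1 = z_0 + h\sum_{i=1}^s b_i\beta(\alpha(Z_i))Z_i . \]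
   Context: $F$ quadratic means that for every $y_0$, $F(y)=F(y_0)+F'(y_0)(y-y_0)+\tfrac12F''(y-y_0,y-y_0)$ with $F''$ a constant symmetric bilinear map. A Jordan operator algebra on $Y$ is a linear subspace of $L(Y,Y)$ closed under $S\bullet T=\tfrac12(ST+TS)$. *)

theory Defs
  imports "HOL-Analysis.Analysis"
begin

text \<open>Finite-dimensional spaces Y, Z over the scalar field 'k are modelled as
coordinate spaces 'k^'n and 'k^'m; linear maps are matrices ('k^'n^'m is L(Y,Z)),
composition is (**), application is (*v).  'k :: real_normed_field means
'k is (isomorphic to) the real or the complex numbers.\<close>

definition mscale :: "'k::times \<Rightarrow> 'k^'n^'m \<Rightarrow> 'k^'n^'m" where
  "mscale c M = (\<chi> i j. c * M $ i $ j)"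

definition symmetric_bilinear :: "('k::field^'n \<Rightarrow> 'k^'n \<Rightarrow> 'k^'m) \<Rightarrow> bool" where
  "symmetric_bilinear B \<longleftrightarrow>
     (\<forall>x y. B x y = B y x) \<and>
     (\<forall>x y z. B (x + y) z = B x z + B y z) \<and>
     (\<forall>c x z. B (c *s x) z = c *s B x z)"

definition quadratic_map ::
  "('k::field^'n \<Rightarrow> 'k^'m) \<Rightarrow> ('k^'n \<Rightarrow> 'k^'n^'m) \<Rightarrow> ('k^'n \<Rightarrow> 'k^'n \<Rightarrow> 'k^'m) \<Rightarrow> bool" where
  "quadratic_map F F' F'' \<longleftrightarrow>
     symmetric_bilinear F'' \<and>
     (\<forall>y0 y. F y = F y0 + F' y0 *v (y - y0) + (1/2) *s F'' (y - y0) (y - y0))"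

definition jordan_product :: "'k::field^'n^'n \<Rightarrow> 'k^'n^'n \<Rightarrow> 'k^'n^'n" where
  "jordan_product S T = mscale (1/2) (S ** T + T ** S)"

definition jordan_operator_algebra :: "('k::field^'n^'n) set \<Rightarrow> bool" where
  "jordan_operator_algebra A \<longleftrightarrow>
     0 \<in> A \<and> (\<forall>S\<in>A. \<forall>T\<in>A. S + T \<in> A) \<and> (\<forall>c. \<forall>T\<in>A. mscale c T \<in> A) \<and>
     (\<forall>S\<in>A. \<forall>T\<in>A. jordan_product S T \<in> A)"

end

theory Submission
  imports Defs
begin

lemma mv_add: "(A::'k::comm_ring_1^'n^'m) *v (x + y) = A *v x + A *v y"
  by (simp add: vec_eq_iff matrix_vector_mult_def sum.distrib algebra_simps)
lemma mv_scal: "(A::'k::comm_ring_1^'n^'m) *v (c *s x) = c *s (A *v x)"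
  by (simp add: vec_eq_iff matrix_vector_mult_def sum_distrib_left algebra_simps)
lemma mv_neg: "(A::'k::comm_ring_1^'n^'m) *v (- x) = - (A *v x)"
  by (simp add: vec_eq_iff matrix_vector_mult_def sum_negf)
lemma mv_diff: "(A::'k::comm_ring_1^'n^'m) *v (x - y) = A *v x - A *v y"
  by (simp add: vec_eq_iff matrix_vector_mult_def sum_subtractf algebra_simps)

lemma sb:
  assumes "symmetric_bilinear (B::'k::field^'n \<Rightarrow> 'k^'n \<Rightarrow> 'k^'m)"
  shows "B (x+y) z = B x z + B y z" "B z (x+y) = B z x + B z y"
    "B (c *s x) z = c *s B x z" "B z (c *s x) = c *s B z x"
    "B (-x) z = - B x z" "B z (-x) = - B z x"
    "B (x - y) z = B x z - B y z" "B z (x - y) = B z x - B z y"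
    "B x y = B y x"
proof -
  have s: "B x y = B y x" for x y using assms unfolding symmetric_bilinear_def by blast
  have a: "B (x+y) z = B x z + B y z" for x y z using assms unfolding symmetric_bilinear_def by blast
  have m: "B (c *s x) z = c *s B x z" for c x z using assms unfolding symmetric_bilinear_def by blast
  have n: "B (-x) z = - B x z" for x z
    using m[of "-1" x z] by (simp add: vector_sneg_minus1[symmetric])
  show "B (x+y) z = B x z + B y z" by (rule a)
  show "B z (x+y) = B z x + B z y" using a s by metis
  show "B (c *s x) z = c *s B x z" by (rule m)
  show "B z (c *s x) = c *s B z x" using m s by metis
  show "B (-x) z = - B x z" by (rule n)
  show "B z (-x) = - B z x" using n s by metis
  show "B (x - y) z = B x z - B y z" using a[of x "-y" z] n[of y z] by simp
  then show "B z (x - y) = B z x - B z y" using s by metis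
  show "B x y = B y x" by (rule s)
qed

lemma half_twice: "(1/2::'k::field_char_0) *s (x + x) = x"
  by (simp add: vec_eq_iff field_simps)

lemma dF_lemma:
  fixes F :: "'k::real_normed_field^'n \<Rightarrow> 'k^'m"
  assumes quad: "quadratic_map F F' F''"
  shows "F' y1 *v u = F' y0 *v u + F'' (y1 - y0) u"
proof -
  have SB: "symmetric_bilinear F''" and Q: "\<And>a y. F y = F a + F' a *v (y - a) + (1/2) *s F'' (y - a) (y - a)"
    using quad unfolding quadratic_map_def by blast+
  note sbl = sb[OF SB]
  define d where "d = y1 - y0"
  have e1: "F (y1+u) = F y0 + F' y0 *v (d + u) + (1/2) *s F'' (d+u) (d+u)"
    using Q[where a=y0 and y="y1+u"] by (simp add: d_def algebra_simps)
  have e2: "F (y1+u) = F y1 + F' y1 *v u + (1/2) *s F'' u u" using Q[where a=y1 and y="y1+u"] by simp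
  have e3: "F y1 = F y0 + F' y0 *v d + (1/2) *s F'' d d" using Q[where a=y0 and y=y1] by (simp add: d_def)
  have e4: "F'' (d+u) (d+u) = F'' d d + (F'' d u + F'' d u) + F'' u u"
    using sbl(1,2) sbl(9)[of u d] by (simp add: algebra_simps)
  have "F' y1 *v u = F' y0 *v u + (1/2) *s (F'' d u + F'' d u)"
    using e1 e2 e3 e4 by (simp add: mv_add vector_add_ldistrib algebra_simps)
  then show ?thesis unfolding half_twice d_def .
qed
lemma dbl_cancel: "(x::'k::field_char_0^'n) + x = y + y \<Longrightarrow> x = y"
  by (metis half_twice)

lemma key_lemma:
  fixes F :: "'k::real_normed_field^'n \<Rightarrow> 'k^'m"
  assumes quad: "quadratic_map F F' F''"
    and beta: "\<And>y T. T \<in> A \<Longrightarrow> F' y *v (T *v y) = \<beta> T *v F y"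
    and TA: "T \<in> A" and TTA: "T ** T \<in> A"
  shows "F'' (T *v y) (T *v y) = (\<beta> T ** \<beta> T) *v F y - \<beta> (T ** T) *v F y"
proof -
  have SB: "symmetric_bilinear F''" and Q: "\<And>a y. F y = F a + F' a *v (y - a) + (1/2) *s F'' (y - a) (y - a)"
    using quad unfolding quadratic_map_def by blast+
  note sbl = sb[OF SB]
  have E: "F' y *v (T *v w) + F'' w (T *v y) + F'' w (T *v w)
      = \<beta> T *v (F' y *v w) + (1/2) *s (\<beta> T *v F'' w w)" for w
  proof -
    have "F' (y+w) *v (T *v (y+w)) = \<beta> T *v F (y+w)" using beta[OF TA] .
    moreover have "F' (y+w) *v (T *v (y+w)) = F' y *v (T *v y) + F' y *v (T *v w) + F'' w (T *v y) + F'' w (T *v w)"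
      using dF_lemma[OF quad, of "y+w" "T *v (y+w)" y] by (simp add: mv_add sbl(2) algebra_simps)
    moreover have "\<beta> T *v F (y+w) = \<beta> T *v F y + \<beta> T *v (F' y *v w) + (1/2) *s (\<beta> T *v F'' w w)"
      using Q[where a=y and y="y+w"] by (simp add: mv_add mv_scal)
    ultimately show ?thesis using beta[OF TA, of y] by (simp add: algebra_simps)
  qed
  have E2: "- (F' y *v (T *v w)) - F'' w (T *v y) + F'' w (T *v w)
      = - (\<beta> T *v (F' y *v w)) + (1/2) *s (\<beta> T *v F'' w w)" for w
    using E[of "-w"] by (simp add: mv_neg sbl(5,6))
  have L: "F' y *v (T *v w) + F'' w (T *v y) = \<beta> T *v (F' y *v w)" for w
  proof (rule dbl_cancel)
    have "(F' y *v (T *v w) + F'' w (T *v y) + F'' w (T *v w)) - (- (F' y *v (T *v w)) - F'' w (T *v y) + F'' w (T *v w))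
      = (\<beta> T *v (F' y *v w) + (1/2) *s (\<beta> T *v F'' w w)) - (- (\<beta> T *v (F' y *v w)) + (1/2) *s (\<beta> T *v F'' w w))"
      using E[of w] E2[of w] by simp
    then show "F' y *v (T *v w) + F'' w (T *v y) + (F' y *v (T *v w) + F'' w (T *v y)) = \<beta> T *v (F' y *v w) + \<beta> T *v (F' y *v w)"
      by (simp add: algebra_simps)
  qed
  have "F' y *v (T *v (T *v y)) + F'' (T *v y) (T *v y) = \<beta> T *v (\<beta> T *v F y)"
    using L[of "T *v y"] beta[OF TA, of y] by simp
  moreover have "F' y *v (T *v (T *v y)) = \<beta> (T ** T) *v F y"
    using beta[OF TTA, of y] by (simp add: matrix_vector_mul_assoc)
  ultimately show ?thesis by (simp add: matrix_vector_mul_assoc algebra_simps)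
qed
lemma mid_lemma:
  fixes F :: "'k::real_normed_field^'n \<Rightarrow> 'k^'m"
  assumes quad: "quadratic_map F F' F''"
  shows "F (Y + v) = F (Y - v) + (F' Y *v v + F' Y *v v)"
    and "F Y = F (Y - v) + F' Y *v v - (1/2) *s F'' v v"
proof -
  have SB: "symmetric_bilinear F''" and Q: "\<And>a y. F y = F a + F' a *v (y - a) + (1/2) *s F'' (y - a) (y - a)"
    using quad unfolding quadratic_map_def by blast+
  note sbl = sb[OF SB]
  have a: "F (Y + v) = F Y + F' Y *v v + (1/2) *s F'' v v" using Q[where a=Y and y="Y+v"] by simp
  have b: "F (Y - v) = F Y - F' Y *v v + (1/2) *s F'' v v" using Q[where a=Y and y="Y-v"]
    by (simp add: mv_neg sbl(5,6))
  show "F (Y + v) = F (Y - v) + (F' Y *v v + F' Y *v v)" using a b by (simp add: algebra_simps)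
  show "F Y = F (Y - v) + F' Y *v v - (1/2) *s F'' v v" using b by (simp add: algebra_simps)
qed

lemma sq_in:
  fixes T :: "'k::field_char_0^'n^'n"
  assumes "jordan_operator_algebra A" "T \<in> A"
  shows "T ** T \<in> A"
proof -
  have "jordan_product T T = T ** T"
    by (simp add: jordan_product_def mscale_def vec_eq_iff field_simps)
  then show ?thesis using assms unfolding jordan_operator_algebra_def by metis
qed
theorem corollary3p3:
  fixes F :: "'k::real_normed_field^'n \<Rightarrow> 'k^'m"
    and F' :: "'k^'n \<Rightarrow> 'k^'n^'m"
    and F'' :: "'k^'n \<Rightarrow> 'k^'n \<Rightarrow> 'k^'m"
    and A :: "('k^'n^'n) set"
    and \<alpha> :: "'k^'m \<Rightarrow> 'k^'n^'n"
    and \<beta> :: "'k^'n^'n \<Rightarrow> 'k^'m^'m"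
    and b :: "nat \<Rightarrow> real" and s :: nat and h :: real
    and y0 y1 :: "'k^'n" and Ys :: "nat \<Rightarrow> 'k^'n"
    and f :: "'k^'n \<Rightarrow> 'k^'n"
  assumes quad: "quadratic_map F F' F''"
    and jordan: "jordan_operator_algebra A"
    and alpha: "\<And>z. \<alpha> z \<in> A"
    and beta: "\<And>y T. T \<in> A \<Longrightarrow> F' y *v (T *v y) = \<beta> T *v F y"
    and b_nz: "\<And>i. i \<in> {1..s} \<Longrightarrow> b i \<noteq> 0"
    and h_pos: "h > 0"
    and f_def: "\<And>y. f y = \<alpha> (F y) *v y"
    and stages: "\<And>i. i \<in> {1..s} \<Longrightarrow>
       Ys i = y0 + of_real h *s (\<Sum>j\<in>{1..<i}. of_real (b j) *s f (Ys j))
                 + of_real (h / 2 * b i) *s f (Ys i)"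
    and step: "y1 = y0 + of_real h *s (\<Sum>i\<in>{1..s}. of_real (b i) *s f (Ys i))"
  shows "(\<forall>i\<in>{1..s}.
            F (Ys i) = F y0
              + of_real h *s (\<Sum>j\<in>{1..<i}. of_real (b j) *s (\<beta> (\<alpha> (F (Ys j))) *v F (Ys j)))
              + of_real (h / 2 * b i) *s (\<beta> (\<alpha> (F (Ys i))) *v F (Ys i))
              - of_real (h^2 / 8 * (b i)^2) *s
                  ((\<beta> (\<alpha> (F (Ys i))) ** \<beta> (\<alpha> (F (Ys i)))
                    - \<beta> (\<alpha> (F (Ys i)) ** \<alpha> (F (Ys i)))) *v F (Ys i)))
       \<and> F y1 = F y0 + of_real h *s (\<Sum>i\<in>{1..s}. of_real (b i) *s (\<beta> (\<alpha> (F (Ys i))) *v F (Ys i)))"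
proof -
  have SB: "symmetric_bilinear F''" using quad unfolding quadratic_map_def by blast
  note sbl = sb[OF SB]
  define T where "T i = \<alpha> (F (Ys i))" for i
  define W where "W i = y0 + of_real h *s (\<Sum>j\<in>{1..<i}. of_real (b j) *s f (Ys j))" for i
  define c where "c i = (of_real (h/2 * b i) :: 'k)" for i
  define v where "v i = c i *s (T i *v Ys i)" for i
  have fY: "f (Ys i) = T i *v Ys i" for i by (simp add: f_def T_def)
  have Yi: "Ys i = W i + v i" if "i \<in> {1..s}" for i
    using stages[OF that] by (simp add: W_def v_def c_def fY)
  have Wsuc: "W (Suc i) = Ys i + v i" if "i \<in> {1..s}" for i
  proof -
    have "W (Suc i) = W i + of_real h *s (of_real (b i) *s f (Ys i))"
      using that by (simp add: W_def vector_add_ldistrib algebra_simps)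
    also have "\<dots> = W i + v i + v i"
      by (simp add: v_def c_def fY vec_eq_iff field_simps)
    finally show ?thesis using Yi[OF that] by simp
  qed
  have Wm: "W i = Ys i - v i" if "i \<in> {1..s}" for i using Yi[OF that] by simp
  have Fv: "F' (Ys i) *v v i = c i *s (\<beta> (T i) *v F (Ys i))" for i
    using beta[OF alpha, of "Ys i" "F (Ys i)"] by (simp add: v_def mv_scal T_def)
  have FW: "F (W (Suc i)) = F (W i) + of_real h *s (of_real (b i) *s (\<beta> (T i) *v F (Ys i)))"
    if "i \<in> {1..s}" for i
  proof -
    have "F (W (Suc i)) = F (W i) + (c i *s (\<beta> (T i) *v F (Ys i)) + c i *s (\<beta> (T i) *v F (Ys i)))"
      using mid_lemma(1)[OF quad, of "Ys i" "v i"] Wsuc[OF that] Wm[OF that] Fv by simp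
    then show ?thesis by (simp add: c_def vec_eq_iff field_simps)
  qed
  have tele: "F (W i) = F y0 + of_real h *s (\<Sum>j\<in>{1..<i}. of_real (b j) *s (\<beta> (T j) *v F (Ys j)))"
    if "i \<le> Suc s" for i
    using that
  proof (induction i)
    case 0
    then show ?case by (simp add: W_def)
  next
    case (Suc i)
    show ?case
    proof (cases "i = 0")
      case True
      then show ?thesis by (simp add: W_def)
    next
      case False
      then have i: "i \<in> {1..s}" using Suc.prems by auto
      show ?thesis using FW[OF i] Suc.IH Suc.prems False
        by (simp add: vector_add_ldistrib algebra_simps)
    qed
  qed
  have stage: "F (Ys i) = F y0
              + of_real h *s (\<Sum>j\<in>{1..<i}. of_real (b j) *s (\<beta> (\<alpha> (F (Ys j))) *v F (Ys j)))
              + of_real (h / 2 * b i) *s (\<beta> (\<alpha> (F (Ys i))) *v F (Ys i))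
              - of_real (h^2 / 8 * (b i)^2) *s
                  ((\<beta> (\<alpha> (F (Ys i))) ** \<beta> (\<alpha> (F (Ys i)))
                    - \<beta> (\<alpha> (F (Ys i)) ** \<alpha> (F (Ys i)))) *v F (Ys i))"
    if i: "i \<in> {1..s}" for i
  proof -
    have TA: "T i \<in> A" by (simp add: T_def alpha)
    have K: "F'' (T i *v Ys i) (T i *v Ys i) = (\<beta> (T i) ** \<beta> (T i)) *v F (Ys i) - \<beta> (T i ** T i) *v F (Ys i)"
      by (rule key_lemma[OF quad beta TA sq_in[OF jordan TA]])
    have "F (Ys i) = F (W i) + F' (Ys i) *v v i - (1/2) *s F'' (v i) (v i)"
      using mid_lemma(2)[OF quad, of "Ys i" "v i"] Wm[OF i] by simp
    also have "F'' (v i) (v i) = (c i * c i) *s F'' (T i *v Ys i) (T i *v Ys i)"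
      by (simp add: v_def sbl(3,4) vector_smult_assoc mult.commute)
    finally have "F (Ys i) = F (W i) + c i *s (\<beta> (T i) *v F (Ys i))
        - ((1/2) * (c i * c i)) *s ((\<beta> (T i) ** \<beta> (T i)) *v F (Ys i) - \<beta> (T i ** T i) *v F (Ys i))"
      using K Fv by (simp add: vector_smult_assoc)
    moreover have "(1/2) * (c i * c i) = (of_real (h^2 / 8 * (b i)^2) :: 'k)"
      by (simp add: c_def power2_eq_square field_simps)
    ultimately show ?thesis using tele[of i] i
      by (simp add: T_def c_def mv_diff matrix_vector_mult_diff_rdistrib)
  qed
  have "y1 = W (Suc s)" by (simp add: step W_def atLeastLessThanSuc_atLeastAtMost)
  then have "F y1 = F y0 + of_real h *s (\<Sum>i\<in>{1..s}. of_real (b i) *s (\<beta> (\<alpha> (F (Ys i))) *v F (Ys i)))"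
    using tele[of "Suc s"] by (simp add: T_def atLeastLessThanSuc_atLeastAtMost)
  then show ?thesis using stage by blast
qed
end
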